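(* Let $\mathcal{R}$ be a fusion ring with basis $\{x_1=1,\ldots,x_m\}$ and fusion matrices $M_j$. Then the primary $2$-matrix is positive semidefinite: \[ \sum_{j=1}^m M_j\otimes M_j\geq0. \]
   Context: A fusion ring is a ring $\mathcal{R}$ which is a free $\mathbb{Z}$-module with a finite basis $\{x_1=1,\ldots,x_m\}$ such that $x_ix_j=\sum_k N_{ij}^k x_k$ with $N_{ij}^k\in\mathbb{N}$; there is an involution $i\mapsto i^*$ whose $\mathbb{Z}$-linear extension is an anti-involution of $\mathcal{R}$; and the coefficient of $x_1$ in $x_ix_j$ equals $\delta_{i,j^*}$. The fusion matrix of $x_j$ is $(M_j)_{k,i}=N_{ji}^k$; $\otimes$ is the Kronecker product. *)

theory Defs
  imports "HOL-Analysis.Analysis"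
begin

text \<open>A fusion ring with finite basis indexed by the finite type 'b, unit basis element
  indexed by e, structure constants N i j k (coefficient of x_k in x_i x_j) and
  involution d on indices.\<close>

definition fusion_ring :: "('b::finite \<Rightarrow> 'b \<Rightarrow> 'b \<Rightarrow> nat) \<Rightarrow> 'b \<Rightarrow> ('b \<Rightarrow> 'b) \<Rightarrow> bool" where
  "fusion_ring N e d \<longleftrightarrow>
     \<comment> \<open>associativity of the multiplication\<close>
     (\<forall>i j k t. (\<Sum>l\<in>UNIV. N i j l * N l k t) = (\<Sum>l\<in>UNIV. N j k l * N i l t)) \<and>
     \<comment> \<open>x_e is the unit\<close>
     (\<forall>i k. N e i k = (if k = i then 1 else 0)) \<and>
     (\<forall>i k. N i e k = (if k = i then 1 else 0)) \<and>
     \<comment> \<open>d is an involution whose linear extension is an anti-involution\<close>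
     (\<forall>i. d (d i) = i) \<and>
     (\<forall>i j k. N (d j) (d i) (d k) = N i j k) \<and>
     \<comment> \<open>coefficient of the unit in x_i x_j is delta(i, j*)\<close>
     (\<forall>i j. N i j e = (if i = d j then 1 else 0))"

definition fusion_matrix :: "('b::finite \<Rightarrow> 'b \<Rightarrow> 'b \<Rightarrow> nat) \<Rightarrow> 'b \<Rightarrow> real^'b^'b" where
  "fusion_matrix N j = (\<chi> k i. real (N j i k))"

definition kron :: "real^'n::finite^'m::finite \<Rightarrow> real^'q::finite^'p::finite \<Rightarrow> real^('n\<times>'q)^('m\<times>'p)" where
  "kron A B = (\<chi> r c. A$(fst r)$(fst c) * B$(snd r)$(snd c))"

definition psd :: "real^'n::finite^'n \<Rightarrow> bool" where
  "psd A \<longleftrightarrow> transpose A = A \<and> (\<forall>v. 0 \<le> v \<bullet> (A *v v))"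

end

theory Submission
  imports Defs
begin

lemma frob_sum:
  fixes N :: "'b::finite \<Rightarrow> 'b \<Rightarrow> 'b \<Rightarrow> nat" and e :: 'b and d :: "'b \<Rightarrow> 'b"
  assumes "fusion_ring N e d"
  shows "(\<Sum>j\<in>UNIV. N j i k * N j i' k') = (\<Sum>l\<in>UNIV. N (d k') k l * N (d i') i l)"
proof -
  have assoc: "\<And>i j k t. (\<Sum>l\<in>UNIV. N i j l * N l k t) = (\<Sum>l\<in>UNIV. N j k l * N i l t)"
    and dd: "\<And>i. d (d i) = i" and anti: "\<And>i j k. N (d j) (d i) (d k) = N i j k"
    and ue: "\<And>i j. N i j e = (if i = d j then 1 else 0)"
    using assms unfolding fusion_ring_def by auto
  have F1: "N a b (d c) = N b c (d a)" for a b c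
  proof -
    have "(\<Sum>l\<in>UNIV. N a b l * N l c e) = (\<Sum>l\<in>UNIV. N b c l * N a l e)" by (rule assoc)
    moreover have "(\<Sum>l\<in>UNIV. N a b l * N l c e) = N a b (d c)"
      by (simp add: ue if_distrib cong: if_cong)
    moreover have "(\<Sum>l\<in>UNIV. N b c l * N a l e) = N b c (d a)"
    proof -
      have "(\<Sum>l\<in>UNIV. N b c l * N a l e) = (\<Sum>l\<in>UNIV. if l = d a then N b c l else 0)"
        proof (rule sum.cong)
          fix x
          have "(a = d x) = (x = d a)" by (metis dd)
          then show "N b c x * N a x e = (if x = d a then N b c x else 0)" by (simp add: ue)
        qed simp
      then show ?thesis by simp
    qed
    ultimately show ?thesis by simp
  qed
  have F3: "N a b c = N c (d b) a" for a b c
    by (metis F1 anti dd)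
  have s1: "N j i k * N j i' k' = N k (d i) j * N (d k') j (d i')" for j
    by (metis F1 F3 dd)
  have "(\<Sum>j\<in>UNIV. N j i k * N j i' k') = (\<Sum>j\<in>UNIV. N k (d i) j * N (d k') j (d i'))"
    using s1 by simp
  also have "\<dots> = (\<Sum>l\<in>UNIV. N (d k') k l * N l (d i) (d i'))"
    by (rule assoc[symmetric])
  also have "\<dots> = (\<Sum>l\<in>UNIV. N (d k') k l * N (d i') i l)"
  proof -
    have "N l (d i) (d i') = N (d i') i l" for l
      by (metis F1 F3 dd)
    then show ?thesis by simp
  qed
  finally show ?thesis .
qed

theorem mainTheorem16:
  fixes N :: "'b::finite \<Rightarrow> 'b \<Rightarrow> 'b \<Rightarrow> nat" and e :: 'b and d :: "'b \<Rightarrow> 'b"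
  assumes "fusion_ring N e d"
  shows "psd (\<Sum>j\<in>UNIV. kron (fusion_matrix N j) (fusion_matrix N j))"
proof -
  let ?P = "\<Sum>j\<in>UNIV. kron (fusion_matrix N j) (fusion_matrix N j)"
  define A where "A l r = real (N (d (snd r)) (fst r) l)" for l and r :: "'b \<times> 'b"
  have ent: "?P $ r $ c = (\<Sum>l\<in>UNIV. A l r * A l c)" for r c
  proof -
    have "?P $ r $ c = (\<Sum>j\<in>UNIV. real (N j (fst c) (fst r) * N j (snd c) (snd r)))"
      by (simp add: sum_component kron_def fusion_matrix_def)
    also have "\<dots> = real (\<Sum>j\<in>UNIV. N j (fst c) (fst r) * N j (snd c) (snd r))"
      by simp
    also have "\<dots> = real (\<Sum>l\<in>UNIV. N (d (snd r)) (fst r) l * N (d (snd c)) (fst c) l)"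
      using frob_sum[OF assms] by metis
    also have "\<dots> = (\<Sum>l\<in>UNIV. A l r * A l c)" by (simp add: A_def)
    finally show ?thesis .
  qed
  have sym: "transpose ?P = ?P"
  proof -
    have "transpose ?P $ r $ c = ?P $ r $ c" for r c
      unfolding transpose_def vec_lambda_beta ent by (simp add: mult.commute)
    then show ?thesis by (simp add: vec_eq_iff)
  qed
  have q: "0 \<le> v \<bullet> (?P *v v)" for v
  proof -
    have "v \<bullet> (?P *v v) = (\<Sum>r\<in>UNIV. v $ r * (\<Sum>c\<in>UNIV. (\<Sum>l\<in>UNIV. A l r * A l c) * v $ c))"
      unfolding inner_vec_def matrix_vector_mult_def vec_lambda_beta ent by simp
    also have "\<dots> = (\<Sum>r\<in>UNIV. \<Sum>c\<in>UNIV. \<Sum>l\<in>UNIV. (A l r * v $ r) * (A l c * v $ c))"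
      by (simp add: sum_distrib_left sum_distrib_right mult_ac)
    also have "\<dots> = (\<Sum>r\<in>UNIV. \<Sum>l\<in>UNIV. \<Sum>c\<in>UNIV. (A l r * v $ r) * (A l c * v $ c))"
      by (rule sum.cong[OF refl], rule sum.swap)
    also have "\<dots> = (\<Sum>l\<in>UNIV. \<Sum>r\<in>UNIV. \<Sum>c\<in>UNIV. (A l r * v $ r) * (A l c * v $ c))"
      by (rule sum.swap)
    also have "\<dots> = (\<Sum>l\<in>UNIV. (\<Sum>r\<in>UNIV. A l r * v $ r)^2)"
      by (simp add: power2_eq_square sum_product)
    also have "\<dots> \<ge> 0" by (simp add: sum_nonneg)
    finally show ?thesis by simp
  qed
  show ?thesis unfolding psd_def using sym q by blast
qed

end
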